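(* Let $t_{\mathrm f}>0$ be fixed. Consider a two-mode semi-Markov jump linear system with modes $a$ and $b$ (the process alternates $a\to b\to a\to\cdots$). Mode $a$ has dynamics $(A_1(t),B_1(t))$, control gain $\Gamma_1(t)$ and weights $(Q_1(t),R_1(t),S_1)$; mode $b$ has $(A_2(t),B_2(t))$, $\Gamma_2(t)$, $(Q_2(t),R_2(t),S_2)$, where the gains are given bounded piecewise continuous functions. The holding time of mode $a$ is modeled by an $m$-phase phase-type model $(\Pi_a,\eta_a,\alpha_a)$ and that of mode $b$ by a $p$-phase phase-type model $(\Pi_b,\eta_b,\alpha_b)$, with $\eta_a=-\Pi_a\mathbf 1_m$, $\eta_b=-\Pi_b\mathbf 1_p$, $\alpha_a=[1,0,\dots,0]^\top\in\mathbb R^m$, $\alpha_b=[1,0,\dots,0]^\top\in\mathbb R^p$, $m,p$ arbitrary finite. The Markovianized jump process is the Markov chain on $\{1,\dots,m+p\}$ with transition rate matrix $$\bar\Pi=\begin{bmatrix}\Pi_a&\eta_a\alpha_b^\top\\ \eta_b\alpha_a^\top&\Pi_b\end{bmatrix},$$ states $1,\dots,m$ carrying the data of mode $a$ (index $1$) and states $m+1,\dots,m+p$ the data of mode $b$ (index $2$). Let $\bar A_\ell=A_\ell+B_\ell\Gamma_\ell$, $L_\ell=Q_\ell+\Gamma_\ell^\top R_\ell\Gamma_\ell$ ($\ell=1,2$), and let $\Lambda_i$, $i=1,\dots,m+p$, solve $$-\dot\Lambda_i=\bar A_{\ell(i)}^\top\Lambda_i+\Lambda_i\bar A_{\ell(i)}+L_{\ell(i)}+\sum_{j=1}^{m+p}\pi_{ij}\Lambda_j,\qquad\Lambda_i(t_{\mathrm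 f})=S_{\ell(i)},$$ where $\ell(i)=1$ for $i\le m$ and $\ell(i)=2$ otherwise, and $\bar\Pi=[\pi_{ij}]$. Then for all $t\in[0,t_{\mathrm f}]$, $$\Lambda_1(t)=\bar F_a(t_{\mathrm f}-t)\Phi_{\bar A_1}^\top(t_{\mathrm f},t)S_1\Phi_{\bar A_1}(t_{\mathrm f},t)+\int_t^{t_{\mathrm f}}\bar F_a(\tau-t)\Phi_{\bar A_1}^\top(\tau,t)L_1(\tau)\Phi_{\bar A_1}(\tau,t)d\tau+\int_t^{t_{\mathrm f}}f_a(\tau-t)\Phi_{\bar A_1}^\top(\tau,t)\Lambda_{m+1}(\tau)\Phi_{\bar A_1}(\tau,t)d\tau,$$ $$\Lambda_{m+1}(t)=\bar F_b(t_{\mathrm f}-t)\Phi_{\bar A_2}^\top(t_{\mathrm f},t)S_2\Phi_{\bar A_2}(t_{\mathrm f},t)+\int_t^{t_{\mathrm f}}\bar F_b(\tau-t)\Phi_{\bar A_2}^\top(\tau,t)L_2(\tau)\Phi_{\bar A_2}(\tau,t)d\tau+\int_t^{t_{\mathrm f}}f_b(\tau-t)\Phi_{\bar A_2}^\top(\tau,t)\Lambda_1(\tau)\Phi_{\bar A_2}(\tau,t)d\tau,$$ where $f_a(t)=\alpha_a^\top e^{\Pi_a t}\eta_a$, $\bar F_a(t)=\alpha_a^\top e^{\Pi_a t}\mathbf 1_m$, $f_b(t)=\alpha_b^\top e^{\Pi_b t}\eta_b$, $\bar F_b(t)=\alpha_b^\top e^{\Pi_b t}\mathbf 1_p$ are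 the pdfs and complementary cdfs of the holding times of modes $a$ and $b$.
   Context: A phase-type model $(\Pi,\eta,\alpha)$ with $m$ phases consists of a sub-generator matrix $\Pi\in\mathbb R^{m\times m}$ (invertible, nonnegative off-diagonal entries, negative diagonal entries, nonpositive row sums), exit vector $\eta=-\Pi\mathbf 1_m\ge0$ and starting vector $\alpha\ge0$; it describes the absorption time of a Markov chain with transient states $1,\dots,m$. $\mathbf 1_m$ is the all-ones vector. $\Phi_{M}(t,\tau)$ denotes the state transition matrix of $\dot z=M(t)z$, i.e. $\partial_t\Phi_M(t,\tau)=M(t)\Phi_M(t,\tau)$, $\Phi_M(\tau,\tau)=I$. *)

theory Defs
  imports "HOL-Analysis.Analysis"
begin

definition mat_exp :: "real^'m^'m \<Rightarrow> real^'m^'m" where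
  "mat_exp M = (\<Sum>k. (1 / fact k) *\<^sub>R (((**) M) ^^ k) (mat 1))"

definition bpc_on :: "real \<Rightarrow> real \<Rightarrow> (real \<Rightarrow> 'a::real_normed_vector) \<Rightarrow> bool" where
  "bpc_on a b f \<longleftrightarrow> bounded (f ` {a..b}) \<and>
     (\<exists>D. finite D \<and> D \<subseteq> {a..b} \<and> continuous_on ({a..b} - D) f \<and>
        (\<forall>d\<in>D. (a < d \<longrightarrow> (\<exists>l. (f \<longlongrightarrow> l) (at_left d))) \<and>
                 (d < b \<longrightarrow> (\<exists>l. (f \<longlongrightarrow> l) (at_right d)))))"

definition state_trans :: "(real \<Rightarrow> real^'n^'n) \<Rightarrow> real \<Rightarrow> real \<Rightarrow> real^'n^'n" where
  "state_trans M t \<tau> = (THE Y. \<exists>X. X \<tau> = mat 1 \<and> X t = Y \<and>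
       continuous_on (closed_segment \<tau> t) X \<and>
       (\<exists>D. finite D \<and> (\<forall>s\<in>closed_segment \<tau> t - D.
            (X has_vector_derivative (M s ** X s)) (at s within closed_segment \<tau> t))))"

definition subgenerator :: "real^'m^'m \<Rightarrow> bool" where
  "subgenerator P \<longleftrightarrow> invertible P \<and>
     (\<forall>i j. i \<noteq> j \<longrightarrow> P $ i $ j \<ge> 0) \<and> (\<forall>i. P $ i $ i < 0) \<and>
     (\<forall>i. (\<Sum>j\<in>UNIV. P $ i $ j) \<le> 0)"

definition exit_vec :: "real^'m^'m \<Rightarrow> real^'m" where
  "exit_vec P = - (P *v vec 1)"

text \<open>First unit vector [1,0,...,0]; phases are ordered by a well-order on the index type.\<close>
definition first_phase :: "'m::{finite,wellorder}" where
  "first_phase = (LEAST i. True)"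

definition first_unit :: "real^'m::{finite,wellorder}" where
  "first_unit = axis first_phase 1"

definition ph_pdf :: "real^'m^'m \<Rightarrow> real^'m \<Rightarrow> real \<Rightarrow> real" where
  "ph_pdf P \<alpha> t = \<alpha> \<bullet> (mat_exp (t *\<^sub>R P) *v exit_vec P)"

definition ph_ccdf :: "real^'m^'m \<Rightarrow> real^'m \<Rightarrow> real \<Rightarrow> real" where
  "ph_ccdf P \<alpha> t = \<alpha> \<bullet> (mat_exp (t *\<^sub>R P) *v vec 1)"

text \<open>Transition rate matrix of the Markovianized process on the states
  Inl 1..m (mode a) and Inr 1..p (mode b).\<close>
definition pibar :: "real^'m^'m \<Rightarrow> real^'m \<Rightarrow> real^'p^'p \<Rightarrow> real^'p \<Rightarrow> real^('m+'p)^('m+'p)" where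
  "pibar Pa \<alpha>a Pb \<alpha>b = (\<chi> i j. case (i, j) of
       (Inl r, Inl c) \<Rightarrow> Pa $ r $ c
     | (Inl r, Inr c) \<Rightarrow> exit_vec Pa $ r * \<alpha>b $ c
     | (Inr r, Inl c) \<Rightarrow> exit_vec Pb $ r * \<alpha>a $ c
     | (Inr r, Inr c) \<Rightarrow> Pb $ r $ c)"

end

theory Submission
  imports Defs
begin

lemma bilinear_mm: "bilinear ((**) :: real^'n^'m \<Rightarrow> real^'k^'n \<Rightarrow> real^'k^'m)"
  unfolding bilinear_def
  by (auto intro!: linearI simp: matrix_add_ldistrib vec_eq_iff matrix_matrix_mult_def
      sum_distrib_left algebra_simps sum.distrib)

lemma bb_mm: "bounded_bilinear ((**) :: real^'n^'m \<Rightarrow> real^'k^'n \<Rightarrow> real^'k^'m)"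
  using bilinear_mm bilinear_conv_bounded_bilinear by blast

lemma bl_transpose: "bounded_linear (transpose :: real^'n^'m \<Rightarrow> real^'m^'n)"
  by (intro linear_conv_bounded_linear[THEN iffD1] linearI) (auto simp: transpose_def vec_eq_iff)

lemma mm_scaleR_left: "(c *\<^sub>R A) ** (B::real^_^_) = c *\<^sub>R (A ** B)"
  by (rule bounded_bilinear.scaleR_left[OF bb_mm])
lemma mm_scaleR_right: "A ** (c *\<^sub>R (B::real^_^_)) = c *\<^sub>R (A ** B)"
  by (rule bounded_bilinear.scaleR_right[OF bb_mm])
lemma mm_sum_left: "(\<Sum>i\<in>I. f i) ** (B::real^_^_) = (\<Sum>i\<in>I. f i ** B)"
  by (rule bounded_bilinear.sum_left[OF bb_mm])
lemma mm_sum_right: "(B::real^_^_) ** (\<Sum>i\<in>I. f i) = (\<Sum>i\<in>I. B ** f i)"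
  by (rule bounded_bilinear.sum_right[OF bb_mm])
lemma mm_minus_left: "(- A) ** (B::real^_^_) = - (A ** B)"
  by (rule bounded_bilinear.minus_left[OF bb_mm])
lemma mm_minus_right: "A ** (- (B::real^_^_)) = - (A ** B)"
  by (rule bounded_bilinear.minus_right[OF bb_mm])
lemma mm_add_left: "(A + C) ** (B::real^_^_) = A ** B + C ** B"
  by (rule bounded_bilinear.add_left[OF bb_mm])
lemma mm_diff_left: "(A - C) ** (B::real^_^_) = A ** B - C ** B"
  by (rule bounded_bilinear.diff_left[OF bb_mm])
lemma mm_diff_right: "A ** (B - (C::real^_^_)) = A ** B - A ** C"
  by (rule bounded_bilinear.diff_right[OF bb_mm])
lemma mm_zero_left[simp]: "0 ** (B::real^_^_) = 0"
  by (rule bounded_bilinear.zero_left[OF bb_mm])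

definition mpow :: "real^'m^'m \<Rightarrow> nat \<Rightarrow> real^'m^'m" where
  "mpow P k = (((**) P) ^^ k) (mat 1)"

lemma mpow_0[simp]: "mpow P 0 = mat 1" by (simp add: mpow_def)
lemma mpow_Suc: "mpow P (Suc k) = P ** mpow P k" by (simp add: mpow_def)
lemma mpow_Suc': "mpow P (Suc k) = mpow P k ** P"
  by (induction k) (simp_all add: mpow_Suc matrix_mul_assoc)
lemma mpow_scale: "mpow (c *\<^sub>R P) k = (c ^ k) *\<^sub>R mpow P k"
  by (induction k) (simp_all add: mpow_Suc mm_scaleR_left mm_scaleR_right)

lemma mm_norm_bound: obtains K where "K > 0" "\<And>A B. norm ((A::real^'n^'m) ** (B::real^'k^'n)) \<le> norm A * norm B * K"
  using bounded_bilinear.pos_bounded[OF bb_mm] by (metis mult.assoc)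

lemma mpow_norm: obtains C K where "C \<ge> 0" "K \<ge> 0" "\<And>k. norm (mpow (P::real^'m^'m) k) \<le> C * K ^ k"
proof -
  obtain K where K: "K > 0" "\<And>A B. norm ((A::real^'m^'m) ** (B::real^'m^'m)) \<le> norm A * norm B * K"
    using mm_norm_bound by blast
  have "norm (mpow P k) \<le> norm (mat 1 :: real^'m^'m) * (norm P * K) ^ k" for k
  proof (induction k)
    case 0 then show ?case by simp
  next
    case (Suc k)
    have "norm (mpow P (Suc k)) \<le> norm P * norm (mpow P k) * K" using K(2) by (simp add: mpow_Suc)
    also have "\<dots> \<le> norm P * (norm (mat 1 :: real^'m^'m) * (norm P * K) ^ k) * K"
      using Suc K(1) by (intro mult_right_mono mult_left_mono) auto
    finally show ?case by (simp add: algebra_simps)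
  qed
  then show ?thesis using that[of "norm (mat 1 :: real^'m^'m)" "norm P * K"] K(1) by auto
qed

lemma mat_exp_series: "mat_exp (x *\<^sub>R P) = (\<Sum>k. (x ^ k / fact k) *\<^sub>R mpow P k)"
  unfolding mat_exp_def mpow_def[symmetric] mpow_scale by (simp add: divide_inverse mult.commute)

lemma mat_exp_deriv:
  fixes P :: "real^'m^'m"
  shows "((\<lambda>y. mat_exp (y *\<^sub>R P)) has_vector_derivative (mat_exp (x *\<^sub>R P) ** P)) (at x)"
proof -
  obtain C K where CK: "C \<ge> 0" "K \<ge> 0" "\<And>k. norm (mpow P k) \<le> C * K ^ k"
    using mpow_norm by blast
  define R where "R = \<bar>x\<bar> + 1"
  define S where "S = ball (0::real) R"
  define f where "f k y = (y ^ Suc k / fact (Suc k)) *\<^sub>R mpow P (Suc k)" for k y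
  define a where "a k y = (y ^ k / fact k) *\<^sub>R mpow P (Suc k)" for k y
  define A where "A y = (\<Sum>k. a k y)" for y
  have xS: "x \<in> S" by (simp add: S_def R_def)
  have ul: "uniform_limit S (\<lambda>n y. \<Sum>i<n. a i y) A sequentially"
    unfolding A_def
  proof (rule Weierstrass_m_test)
    fix n y assume y: "y \<in> S"
    then have "\<bar>y\<bar> \<le> R" by (simp add: S_def)
    have "norm (a n y) = \<bar>y\<bar> ^ n / fact n * norm (mpow P (Suc n))"
      by (simp add: a_def power_abs)
    also have "\<dots> \<le> R ^ n / fact n * (C * K ^ Suc n)"
      using CK CK(3)[of "Suc n"] \<open>\<bar>y\<bar> \<le> R\<close>
      by (intro mult_mono divide_right_mono power_mono) auto
    finally show "norm (a n y) \<le> R ^ n / fact n * (C * K ^ Suc n)" .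
  next
    have "summable (\<lambda>n. (C * K) * (inverse (fact n) * (R * K) ^ n))"
      by (intro summable_mult summable_exp)
    then show "summable (\<lambda>n. R ^ n / fact n * (C * K ^ Suc n))"
      by (simp add: power_mult_distrib field_simps)
  qed
  have der: "\<And>n y. y \<in> S \<Longrightarrow> (f n has_derivative (\<lambda>h. h *\<^sub>R a n y)) (at y within S)"
  proof -
    fix n y
    have "((\<lambda>y. y ^ Suc n / fact (Suc n)) has_real_derivative (real (Suc n) * y ^ n) / fact (Suc n)) (at y within S)"
      using DERIV_cdivide[OF DERIV_pow[of "Suc n" y S], of "fact (Suc n)"] by simp
    moreover have "(real (Suc n) * y ^ n) / fact (Suc n) = y ^ n / fact n"
      unfolding fact_Suc of_nat_mult by (rule mult_divide_mult_cancel_left) simp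
    ultimately have dd: "((\<lambda>y. y ^ Suc n / fact (Suc n)) has_real_derivative y ^ n / fact n) (at y within S)"
      by simp
    have "(f n has_vector_derivative (y ^ n / fact n) *\<^sub>R mpow P (Suc n)) (at y within S)"
      unfolding f_def using has_vector_derivative_scaleR[OF dd has_vector_derivative_const[of "mpow P (Suc n)"]] by simp
    then show "(f n has_derivative (\<lambda>h. h *\<^sub>R a n y)) (at y within S)"
      by (simp add: has_vector_derivative_def a_def)
  qed
  have unif: "\<forall>\<^sub>F n in sequentially. \<forall>y\<in>S. \<forall>h. norm ((\<Sum>i<n. h *\<^sub>R a i y) - h *\<^sub>R A y) \<le> e * norm h"
    if "e > 0" for e
  proof -
    from ul \<open>e > 0\<close> have "\<forall>\<^sub>F n in sequentially. \<forall>y\<in>S. dist (\<Sum>i<n. a i y) (A y) < e"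
      by (simp add: uniform_limit_iff)
    then show ?thesis
    proof eventually_elim
      case (elim n)
      show ?case
      proof (intro ballI allI)
        fix y h assume "y \<in> S"
        have "norm ((\<Sum>i<n. h *\<^sub>R a i y) - h *\<^sub>R A y) = \<bar>h\<bar> * dist (\<Sum>i<n. a i y) (A y)"
          by (simp add: scaleR_sum_right[symmetric] dist_norm scaleR_diff_right[symmetric])
        also have "\<dots> \<le> \<bar>h\<bar> * e" using elim \<open>y \<in> S\<close> by (intro mult_left_mono) auto
        finally show "norm ((\<Sum>i<n. h *\<^sub>R a i y) - h *\<^sub>R A y) \<le> e * norm h" by (simp add: mult.commute)
      qed
    qed
  qed
  have "(\<lambda>n. f n 0) sums 0" by (simp add: f_def)
  moreover have cS: "convex S" by (simp add: S_def)
  moreover have "0 \<in> S" by (simp add: S_def R_def)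
  ultimately obtain g where g: "\<And>y. y \<in> S \<Longrightarrow> (\<lambda>n. f n y) sums g y \<and> (g has_derivative (\<lambda>h. h *\<^sub>R A y)) (at y within S)"
    using has_derivative_series[of S f "\<lambda>n y h. h *\<^sub>R a n y" "\<lambda>y h. h *\<^sub>R A y", OF cS der unif, of 0 0] by blast
  have eq: "mat_exp (y *\<^sub>R P) = mat 1 + g y" if "y \<in> S" for y
  proof -
    let ?b = "\<lambda>k. (y ^ k / fact k) *\<^sub>R mpow P k"
    have "(\<lambda>k. ?b (Suc k)) sums g y" using g[OF that] by (simp add: f_def)
    then have "?b sums (g y + ?b 0)" by (rule sums_Suc_iff[THEN iffD1])
    then show ?thesis by (simp add: mat_exp_series sums_unique[symmetric] add.commute)
  qed
  have Ax: "A x = mat_exp (x *\<^sub>R P) ** P"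
  proof -
    let ?b = "\<lambda>k. (x ^ k / fact k) *\<^sub>R mpow P k"
    have "(\<lambda>k. ?b (Suc k)) sums g x" using g[OF xS] by (simp add: f_def)
    then have "?b sums (g x + ?b 0)" by (rule sums_Suc_iff[THEN iffD1])
    then have "summable ?b" using summable_def by blast
    then have "(\<Sum>k. ?b k) ** P = (\<Sum>k. ?b k ** P)"
      by (rule bounded_linear.suminf[OF bounded_bilinear.bounded_linear_left[OF bb_mm]])
    then show ?thesis
      by (simp add: A_def a_def mat_exp_series mm_scaleR_left mpow_Suc')
  qed
  have "(g has_derivative (\<lambda>h. h *\<^sub>R A x)) (at x)"
    using g[OF xS] at_within_open[OF xS] by (simp add: S_def)
  then have "((\<lambda>y. mat 1 + g y) has_derivative (\<lambda>h. h *\<^sub>R A x)) (at x)"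
    by (auto intro!: derivative_eq_intros)
  then have "((\<lambda>y. mat_exp (y *\<^sub>R P)) has_derivative (\<lambda>h. h *\<^sub>R A x)) (at x)"
    by (rule has_derivative_transform_within_open[OF _ _ xS]) (auto simp: S_def eq)
  then show ?thesis by (simp add: has_vector_derivative_def Ax)
qed

lemma mat_exp_zero: "mat_exp (0 *\<^sub>R P) = mat 1"
proof -
  have "(\<lambda>k. ((0::real) ^ k / fact k) *\<^sub>R mpow P k) sums (mat 1)"
    using sums_single[of 0 "\<lambda>k. ((0::real) ^ k / fact k) *\<^sub>R mpow P k"]
    by (smt (verit) power_0_left scaleR_zero_left div_0 sums_cong fact_0 div_by_1 mpow_0 power_0 scaleR_one)
  then show ?thesis using mat_exp_series[of 0 P] sums_unique by metis
qed



lemma int_pc: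
  fixes f :: "real \<Rightarrow> 'a::euclidean_space"
  assumes bd: "bounded (f ` {a..b})" and D: "finite D" and c: "continuous_on ({a..b} - D) f"
  shows "f integrable_on {a..b}"
proof -
  obtain B where B0: "\<forall>x\<in>{a..b}. norm (f x) \<le> B" using bd by (auto simp: bounded_iff)
  note B = B0[rule_format]
  have negD: "negligible D" using D by (rule negligible_finite)
  have S: "{a..b} - D \<in> sets lebesgue"
    using negD by (intro sets.Diff) (auto intro: negligible_imp_sets)
  have gi: "(\<lambda>_. B) integrable_on ({a..b} - D)"
    by (rule integrable_spike_set[OF integrable_const_ivl]) (auto intro: negligible_subset[OF negD])
  have "f integrable_on ({a..b} - D)"
    by (rule measurable_bounded_by_integrable_imp_integrable[OF _ gi _ S])
       (auto intro: continuous_imp_measurable_on_sets_lebesgue[OF c S] B)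
  then show ?thesis
    by (rule integrable_spike_set) (auto intro: negligible_subset[OF negD])
qed

lemma at_within_finite:
  fixes x :: "'a::t1_space"
  assumes "finite D" "x \<notin> D"
  shows "at x within (T - D) = at x within T"
  by (rule at_within_nhd[of x "- D"]) (use assms in \<open>auto intro: open_Compl finite_imp_closed\<close>)

fun pic :: "(real \<Rightarrow> real^'n^'n) \<Rightarrow> real \<Rightarrow> nat \<Rightarrow> real \<Rightarrow> real^'n^'n" where
  "pic M a 0 = (\<lambda>s. mat 1)"
| "pic M a (Suc k) = (\<lambda>s. mat 1 + integral {a..s} (\<lambda>u. M u ** pic M a k u))"

lemma poly_integral:
  assumes "a \<le> s"
  shows "((\<lambda>u. (u - a) ^ k) has_integral (s - a) ^ Suc k / Suc k) {a..s}"
proof -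
  have "((\<lambda>u. (u - a) ^ k) has_integral ((s - a) ^ Suc k / Suc k - (a - a) ^ Suc k / Suc k)) {a..s}"
  proof (rule fundamental_theorem_of_calculus[OF assms])
    fix x assume "x \<in> {a..s}"
    have "((\<lambda>u. (u - a) ^ Suc k / Suc k) has_real_derivative (real (Suc k) * ((x - a) ^ k * 1)) / Suc k) (at x within {a..s})"
      by (intro DERIV_cdivide DERIV_power_Suc[where n=k, THEN DERIV_cong]  derivative_eq_intros) auto
    then show "((\<lambda>u. (u - a) ^ Suc k / Suc k) has_vector_derivative (x - a) ^ k) (at x within {a..s})"
      by (simp add: has_real_derivative_iff_has_vector_derivative[symmetric])
  qed
  then show ?thesis by simp
qed

lemma prod_integrable:
  fixes M Y :: "real \<Rightarrow> real^'n^'n"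
  assumes Mb: "\<forall>s\<in>{a..b}. norm (M s) \<le> Km" and D: "finite D" and Mc: "continuous_on ({a..b} - D) M"
    and Y: "continuous_on {a..b} Y"
  shows "(\<lambda>u. M u ** Y u) integrable_on {a..b}"
proof (rule int_pc[OF _ D])
  obtain Kb where Kb: "Kb > 0" "\<And>A B. norm ((A::real^'n^'n) ** (B::real^'n^'n)) \<le> norm A * norm B * Kb"
    using mm_norm_bound by blast
  have "bounded (Y ` {a..b})" by (intro compact_imp_bounded compact_continuous_image Y) auto
  then obtain By where By: "\<forall>x\<in>{a..b}. norm (Y x) \<le> By" by (auto simp: bounded_iff)
  show "bounded ((\<lambda>u. M u ** Y u) ` {a..b})"
    unfolding bounded_iff
  proof (intro exI ballI, clarify)
    fix x assume x: "x \<in> {a..b}"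
    have "0 \<le> Km" using Mb x by (meson norm_ge_zero order_trans)
    have "norm (M x ** Y x) \<le> norm (M x) * norm (Y x) * Kb" by (rule Kb(2))
    also have "\<dots> \<le> Km * By * Kb"
      using Mb By x Kb(1) \<open>0 \<le> Km\<close> by (intro mult_right_mono mult_mono) auto
    finally show "norm (M x ** Y x) \<le> Km * By * Kb" .
  qed
  show "continuous_on ({a..b} - D) (\<lambda>u. M u ** Y u)"
    by (intro bounded_bilinear.continuous_on[OF bb_mm] Mc continuous_on_subset[OF Y]) auto
qed

lemma ode_exists:
  fixes M :: "real \<Rightarrow> real^'n^'n"
  assumes ab: "a \<le> b" and Mb: "\<forall>s\<in>{a..b}. norm (M s) \<le> Km" and D: "finite D"
    and Mc: "continuous_on ({a..b} - D) M"
  shows "\<exists>X. X a = mat 1 \<and> continuous_on {a..b} X \<and>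
    (\<forall>s\<in>{a..b} - D. (X has_vector_derivative M s ** X s) (at s within {a..b}))"
proof -
  obtain Kb where Kb: "Kb > 0" "\<And>A B. norm ((A::real^'n^'n) ** (B::real^'n^'n)) \<le> norm A * norm B * Kb"
    using mm_norm_bound by blast
  have Km0: "Km \<ge> 0" using Mb ab by (meson atLeastAtMost_iff norm_ge_zero order.refl order_trans)
  define K where "K = Km * Kb"
  have K0: "K \<ge> 0" using Km0 Kb by (simp add: K_def)
  have Kbd: "norm (M u ** Y) \<le> K * norm Y" if "u \<in> {a..b}" for u and Y :: "real^'n^'n"
  proof -
    have "norm (M u ** Y) \<le> norm (M u) * norm Y * Kb" by (rule Kb(2))
    also have "\<dots> \<le> Km * norm Y * Kb" using Mb that Kb(1) by (intro mult_right_mono) auto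
    finally show ?thesis by (simp add: K_def algebra_simps)
  qed
  define Xs where "Xs = pic M a"
  have intg: "(\<lambda>u. M u ** Y u) integrable_on {a..b}" if "continuous_on {a..b} Y" for Y :: "real \<Rightarrow> real^'n^'n"
    by (rule prod_integrable[OF Mb D Mc that])
  have cont: "continuous_on {a..b} (Xs k)" for k
  proof (induction k)
    case 0 then show ?case by (simp add: Xs_def)
  next
    case (Suc k)
    then show ?case unfolding Xs_def pic.simps
      by (intro continuous_on_add continuous_on_const indefinite_integral_continuous_1 intg[unfolded Xs_def])
        (simp add: Xs_def)
  qed
  have intgs: "(\<lambda>u. M u ** Xs k u) integrable_on {a..s}" if "s \<in> {a..b}" for k s
    by (rule integrable_subinterval_real[OF intg[OF cont]]) (use that in auto)
  define N1 where "N1 = norm (mat 1 :: real^'n^'n)"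
  define C where "C = K * N1 * (b - a)"
  have C0: "C \<ge> 0" using K0 ab by (simp add: C_def N1_def)
  have alg: "d ^ Suc k / Suc k * (K * C * K ^ k / fact k) = C * (K * d) ^ Suc k / fact (Suc k)" for d :: real and k
    by (simp add: power_mult_distrib fact_Suc field_simps del: of_nat_Suc)
  have bound: "norm (Xs (Suc k) s - Xs k s) \<le> C * (K * (s - a)) ^ k / fact k" if "s \<in> {a..b}" for k s
    using that
  proof (induction k arbitrary: s)
    case 0
    have "norm (Xs 1 s - Xs 0 s) = norm (integral {a..s} (\<lambda>u. M u ** mat 1))"
      by (simp add: Xs_def)
    also have "\<dots> \<le> integral {a..s} (\<lambda>u. K * N1)"
      using intgs[of s 0] 0 Kbd[of _ "mat 1"] by (intro integral_norm_bound_integral) (auto simp: Xs_def N1_def)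
    also have "\<dots> = (s - a) * (K * N1)" using 0 by simp
    also have "\<dots> \<le> (b - a) * (K * N1)" using 0 K0 by (intro mult_right_mono) (auto simp: N1_def)
    finally show ?case by (simp add: C_def algebra_simps)
  next
    case (Suc k)
    have "Xs (Suc (Suc k)) s - Xs (Suc k) s = integral {a..s} (\<lambda>u. M u ** Xs (Suc k) u) - integral {a..s} (\<lambda>u. M u ** Xs k u)"
      by (simp add: Xs_def)
    also have "\<dots> = integral {a..s} (\<lambda>u. M u ** (Xs (Suc k) u - Xs k u))"
      using intgs[OF Suc.prems] by (simp add: integral_diff[symmetric] mm_diff_right)
    finally have eq: "Xs (Suc (Suc k)) s - Xs (Suc k) s = integral {a..s} (\<lambda>u. M u ** (Xs (Suc k) u - Xs k u))" .
    have hi: "((\<lambda>u. (u - a) ^ k * (K * C * K ^ k / fact k)) has_integral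
          (s - a) ^ Suc k / Suc k * (K * C * K ^ k / fact k)) {a..s}"
      using Suc.prems by (intro has_integral_mult_left poly_integral) auto
    have "norm (Xs (Suc (Suc k)) s - Xs (Suc k) s) \<le> integral {a..s} (\<lambda>u. (u - a) ^ k * (K * C * K ^ k / fact k))"
      unfolding eq
    proof (rule integral_norm_bound_integral)
      show "(\<lambda>u. M u ** (Xs (Suc k) u - Xs k u)) integrable_on {a..s}"
        using intgs[OF Suc.prems, of "Suc k"] intgs[OF Suc.prems, of k]
        by (simp add: mm_diff_right integrable_diff)
      show "(\<lambda>u. (u - a) ^ k * (K * C * K ^ k / fact k)) integrable_on {a..s}"
        using hi by blast
      fix u assume u: "u \<in> {a..s}"
      then have ub: "u \<in> {a..b}" using Suc.prems by auto
      have "norm (M u ** (Xs (Suc k) u - Xs k u)) \<le> K * norm (Xs (Suc k) u - Xs k u)" by (rule Kbd[OF ub])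
      also have "\<dots> \<le> K * (C * (K * (u - a)) ^ k / fact k)"
        by (rule mult_left_mono[OF Suc.IH[OF ub] K0])
      also have "\<dots> = (u - a) ^ k * (K * C * K ^ k / fact k)" by (simp add: power_mult_distrib)
      finally show "norm (M u ** (Xs (Suc k) u - Xs k u)) \<le> (u - a) ^ k * (K * C * K ^ k / fact k)" .
    qed
    also have "\<dots> = (s - a) ^ Suc k / Suc k * (K * C * K ^ k / fact k)"
      using hi by (rule integral_unique)
    also have "\<dots> = C * (K * (s - a)) ^ Suc k / fact (Suc k)"
      using alg[of "s - a" k] .
    finally show ?case .
  qed
  define X where "X s = mat 1 + (\<Sum>i. Xs (Suc i) s - Xs i s)" for s
  have ul0: "uniform_limit {a..b} (\<lambda>n s. \<Sum>i<n. Xs (Suc i) s - Xs i s) (\<lambda>s. \<Sum>i. Xs (Suc i) s - Xs i s) sequentially"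
  proof (rule Weierstrass_m_test)
    fix n s assume s: "s \<in> {a..b}"
    have "norm (Xs (Suc n) s - Xs n s) \<le> C * (K * (s - a)) ^ n / fact n" by (rule bound[OF s])
    also have "\<dots> \<le> C * (K * (b - a)) ^ n / fact n"
      using s K0 C0 by (intro divide_right_mono mult_left_mono power_mono mult_left_mono) auto
    finally show "norm (Xs (Suc n) s - Xs n s) \<le> C * (K * (b - a)) ^ n / fact n" .
  next
    have "summable (\<lambda>n. C * (inverse (fact n) * (K * (b - a)) ^ n))"
      by (intro summable_mult summable_exp)
    then show "summable (\<lambda>n. C * (K * (b - a)) ^ n / fact n)" by (simp add: field_simps)
  qed
  have UL: "uniform_limit {a..b} Xs X sequentially"
  proof -
    have eqn: "Xs n s = mat 1 + (\<Sum>i<n. Xs (Suc i) s - Xs i s)" for n s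
      by (simp only: sum_lessThan_telescope[of "\<lambda>i. Xs i s"]) (simp add: Xs_def)
    have "dist (Xs n s) (X s) = dist (\<Sum>i<n. Xs (Suc i) s - Xs i s) (\<Sum>i. Xs (Suc i) s - Xs i s)" for n s
      unfolding X_def by (subst eqn) (rule dist_add_cancel)
    then show ?thesis using ul0
      by (simp only: uniform_limit_iff)
  qed
  have Xc: "continuous_on {a..b} X"
    by (rule uniform_limit_theorem[OF _ UL]) (auto simp: cont)
  have Xint: "X s = mat 1 + integral {a..s} (\<lambda>u. M u ** X u)" if s: "s \<in> {a..b}" for s
  proof -
    have "(\<lambda>n. Xs (Suc n) s) \<longlonglongrightarrow> X s"
      using tendsto_uniform_limitI[OF UL s] by (rule LIMSEQ_Suc)
    moreover have "(\<lambda>n. Xs (Suc n) s) \<longlonglongrightarrow> mat 1 + integral {a..s} (\<lambda>u. M u ** X u)"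
    proof -
      have "(\<lambda>n. integral {a..s} (\<lambda>u. M u ** Xs n u)) \<longlonglongrightarrow> integral {a..s} (\<lambda>u. M u ** X u)"
      proof (rule LIMSEQ_I)
        fix e :: real assume e: "e > 0"
        define e' where "e' = e / (K * (b - a) + 1)"
        have "K * (b - a) \<ge> 0" using K0 ab by simp
        then have e': "e' > 0" using e by (simp add: e'_def)
        from UL e' obtain N where N: "\<And>n. n \<ge> N \<Longrightarrow> \<forall>u\<in>{a..b}. dist (Xs n u) (X u) < e'"
          by (auto simp: uniform_limit_sequentially_iff)
        show "\<exists>N. \<forall>n\<ge>N. norm (integral {a..s} (\<lambda>u. M u ** Xs n u) - integral {a..s} (\<lambda>u. M u ** X u)) < e"
        proof (intro exI allI impI)
          fix n assume n: "n \<ge> N"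
          have iX: "(\<lambda>u. M u ** X u) integrable_on {a..s}"
            by (rule integrable_subinterval_real[OF intg[OF Xc]]) (use s in auto)
          have "norm (integral {a..s} (\<lambda>u. M u ** Xs n u) - integral {a..s} (\<lambda>u. M u ** X u))
              = norm (integral {a..s} (\<lambda>u. M u ** (Xs n u - X u)))"
            using intgs[OF s, of n] iX by (simp add: integral_diff[symmetric] mm_diff_right)
          also have "\<dots> \<le> integral {a..s} (\<lambda>u. K * e')"
          proof (rule integral_norm_bound_integral)
            show "(\<lambda>u. M u ** (Xs n u - X u)) integrable_on {a..s}"
              using intgs[OF s, of n] iX by (simp add: mm_diff_right integrable_diff)
            fix u assume u: "u \<in> {a..s}"
            then have ub: "u \<in> {a..b}" using s by auto
            have "norm (M u ** (Xs n u - X u)) \<le> K * norm (Xs n u - X u)" by (rule Kbd[OF ub])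
            also have "\<dots> \<le> K * e'" using N[OF n] ub K0 by (intro mult_left_mono) (auto simp: dist_norm less_imp_le)
            finally show "norm (M u ** (Xs n u - X u)) \<le> K * e'" .
          qed auto
          also have "\<dots> = (s - a) * (K * e')" using s by simp
          also have "\<dots> \<le> (b - a) * (K * e')" using s K0 e' by (intro mult_right_mono) auto
          also have "\<dots> < e"
          proof -
            have "(b - a) * (K * e') = (K * (b - a)) * e'" by simp
            also have "\<dots> < (K * (b - a) + 1) * e'" using e' by simp
            also have "\<dots> = e" using \<open>K * (b - a) \<ge> 0\<close> by (simp add: e'_def)
            finally show ?thesis .
          qed
          finally show "norm (integral {a..s} (\<lambda>u. M u ** Xs n u) - integral {a..s} (\<lambda>u. M u ** X u)) < e" .
        qed
      qed
      then show ?thesis by (simp add: Xs_def tendsto_add)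
    qed
    ultimately show ?thesis by (rule LIMSEQ_unique)
  qed
  have "X a = mat 1" using Xint[of a] ab by simp
  moreover have "(X has_vector_derivative M s ** X s) (at s within {a..b})" if s: "s \<in> {a..b} - D" for s
  proof -
    have c1: "continuous (at s within ({a..b} - D)) (\<lambda>u. M u ** X u)"
      using s continuous_on_eq_continuous_within
        bounded_bilinear.continuous_on[OF bb_mm Mc continuous_on_subset[OF Xc]] by blast
    have "((\<lambda>u. integral {a..u} (\<lambda>u. M u ** X u)) has_vector_derivative M s ** X s) (at s within ({a..b} - D))"
      by (rule integral_has_vector_derivative_continuous_at[OF intg[OF Xc] s D c1])
    then have "((\<lambda>u. mat 1 + integral {a..u} (\<lambda>u. M u ** X u)) has_vector_derivative M s ** X s) (at s within {a..b})"
      using at_within_finite[OF D, of s "{a..b}"] s by (auto intro!: derivative_eq_intros)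
    then show ?thesis
      by (rule has_vector_derivative_transform_within[where d=1]) (use s Xint in auto)
  qed
  ultimately show ?thesis using Xc by blast
qed



lemma transpose_uminus: "transpose (- A) = - transpose (A::real^'n^'m)"
  by (simp add: transpose_def vec_eq_iff)

lemma state_trans_sol:
  fixes M :: "real \<Rightarrow> real^'n^'n"
  assumes ab: "a \<le> b" and Mb: "\<forall>s\<in>{a..b}. norm (M s) \<le> Km" and D: "finite D"
    and Mc: "continuous_on ({a..b} - D) M"
  obtains X where "X a = mat 1" "continuous_on {a..b} X"
    "\<forall>s\<in>{a..b} - D. (X has_vector_derivative M s ** X s) (at s within {a..b})"
    "\<forall>s\<in>{a..b}. state_trans M s a = X s"
proof -
  obtain X where X: "X a = mat 1" "continuous_on {a..b} X"
    "\<forall>s\<in>{a..b} - D. (X has_vector_derivative M s ** X s) (at s within {a..b})"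
    using ode_exists[OF ab Mb D Mc] by blast
  obtain Kt where Kt: "Kt > 0" "\<And>A. norm (transpose (A::real^'n^'n)) \<le> norm A * Kt"
    using bounded_linear.pos_bounded[OF bl_transpose] by blast
  define N where "N s = - transpose (M s)" for s
  have Nb: "\<forall>s\<in>{a..b}. norm (N s) \<le> Km * Kt"
  proof
    fix s assume s: "s \<in> {a..b}"
    have "norm (N s) \<le> norm (M s) * Kt" using Kt(2)[of "M s"] by (simp add: N_def)
    also have "\<dots> \<le> Km * Kt" using Mb s Kt(1) by (intro mult_right_mono) auto
    finally show "norm (N s) \<le> Km * Kt" .
  qed
  have Nc: "continuous_on ({a..b} - D) N"
    unfolding N_def by (intro continuous_on_minus bounded_linear.continuous_on[OF bl_transpose] Mc)
  obtain U where U: "U a = mat 1" "continuous_on {a..b} U"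
    "\<forall>s\<in>{a..b} - D. (U has_vector_derivative N s ** U s) (at s within {a..b})"
    using ode_exists[OF ab Nb D Nc] by blast
  define V where "V s = transpose (U s)" for s
  have key: "V s0 ** Y s0 = mat 1"
    if s0: "s0 \<in> {a..b}" and Y: "Y a = mat 1" "continuous_on {a..s0} Y" and D2: "finite D2"
      and Yd: "\<forall>s\<in>{a..s0} - D2. (Y has_vector_derivative M s ** Y s) (at s within {a..s0})"
    for s0 Y D2
  proof -
    have "((\<lambda>_. 0) has_integral (V s0 ** Y s0 - V a ** Y a)) {a..s0}"
    proof (rule fundamental_theorem_of_calculus_interior_strong[of "D \<union> D2"])
      show "finite (D \<union> D2)" using D D2 by simp
      show "a \<le> s0" using s0 by simp
      fix x assume x: "x \<in> {a<..<s0} - (D \<union> D2)"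
      have Yx: "(Y has_vector_derivative M x ** Y x) (at x)"
      proof -
        have "x \<in> {a..s0} - D2" using x by auto
        then have "(Y has_vector_derivative M x ** Y x) (at x within {a..s0})" using Yd by blast
        moreover have "at x within {a..s0} = at x" using x by (intro at_within_interior) auto
        ultimately show ?thesis by simp
      qed
      have Ux: "(U has_vector_derivative N x ** U x) (at x)"
      proof -
        have "x \<in> {a..b} - D" using x s0 by auto
        then have "(U has_vector_derivative N x ** U x) (at x within {a..b})" using U(3) by blast
        moreover have "at x within {a..b} = at x" using x s0 by (intro at_within_interior) auto
        ultimately show ?thesis by simp
      qed
      have Vx: "(V has_vector_derivative transpose (N x ** U x)) (at x)"
        unfolding V_def by (rule bounded_linear.has_vector_derivative[OF bl_transpose Ux])
      have tr: "transpose (N x ** U x) = - (V x ** M x)"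
        by (simp add: N_def V_def matrix_transpose_mul transpose_uminus mm_minus_right)
      show "((\<lambda>u. V u ** Y u) has_vector_derivative 0) (at x)"
        using bounded_bilinear.has_vector_derivative[OF bb_mm Vx Yx]
        by (simp add: tr matrix_mul_assoc mm_minus_left)
    next
      have "continuous_on {a..s0} V"
        unfolding V_def using s0
        by (intro bounded_linear.continuous_on[OF bl_transpose] continuous_on_subset[OF U(2)]) auto
      then show "continuous_on {a..s0} (\<lambda>u. V u ** Y u)"
        by (intro bounded_bilinear.continuous_on[OF bb_mm] Y)
    qed
    then have "V s0 ** Y s0 - V a ** Y a = 0"
      using has_integral_unique has_integral_0 by blast
    then show ?thesis using Y U(1) by (simp add: V_def)
  qed
  have "\<forall>s\<in>{a..b}. state_trans M s a = X s"
  proof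
    fix s0 assume s0: "s0 \<in> {a..b}"
    have seg: "closed_segment a s0 = {a..s0}" using s0 by (simp add: closed_segment_eq_real_ivl)
    have Xsub: "continuous_on {a..s0} X" using s0 by (intro continuous_on_subset[OF X(2)]) auto
    have Xdsub: "\<forall>s\<in>{a..s0} - D. (X has_vector_derivative M s ** X s) (at s within {a..s0})"
    proof
      fix s assume s: "s \<in> {a..s0} - D"
      then have "s \<in> {a..b} - D" using s0 by auto
      then have "(X has_vector_derivative M s ** X s) (at s within {a..b})" using X(3) by blast
      then show "(X has_vector_derivative M s ** X s) (at s within {a..s0})"
        by (rule has_vector_derivative_within_subset) (use s0 in auto)
    qed
    have "V s0 ** X s0 = mat 1" by (rule key[OF s0 X(1) Xsub D Xdsub])
    then have XV: "X s0 ** V s0 = mat 1" by (simp add: matrix_left_right_inverse)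
    show "state_trans M s0 a = X s0"
      unfolding state_trans_def seg
    proof (rule the_equality)
      show "\<exists>X'. X' a = mat 1 \<and> X' s0 = X s0 \<and> continuous_on {a..s0} X' \<and>
          (\<exists>D. finite D \<and> (\<forall>s\<in>{a..s0} - D. (X' has_vector_derivative M s ** X' s) (at s within {a..s0})))"
        using X(1) Xsub D Xdsub by blast
    next
      fix Y assume "\<exists>X2. X2 a = mat 1 \<and> X2 s0 = Y \<and> continuous_on {a..s0} X2 \<and>
          (\<exists>D. finite D \<and> (\<forall>s\<in>{a..s0} - D. (X2 has_vector_derivative M s ** X2 s) (at s within {a..s0})))"
      then obtain X2 D2 where X2: "X2 a = mat 1" "X2 s0 = Y" "continuous_on {a..s0} X2" "finite D2"
          "\<forall>s\<in>{a..s0} - D2. (X2 has_vector_derivative M s ** X2 s) (at s within {a..s0})"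
        by blast
      have "V s0 ** X2 s0 = mat 1" by (rule key[OF s0 X2(1,3,4,5)])
      then have "X s0 ** (V s0 ** X2 s0) = X s0" by simp
      then show "Y = X s0" using XV X2(2) by (simp add: matrix_mul_assoc)
    qed
  qed
  then show ?thesis using that X by blast
qed



lemma swap_id:
  fixes E P :: "real^'k^'k" and Lam :: "'k \<Rightarrow> real^'n^'n"
  shows "(\<Sum>c\<in>UNIV. E$e1$c *\<^sub>R (\<Sum>c'\<in>UNIV. P$c$c' *\<^sub>R Lam c')) = (\<Sum>c\<in>UNIV. (E ** P)$e1$c *\<^sub>R Lam c)"
proof -
  have "(\<Sum>c\<in>UNIV. E$e1$c *\<^sub>R (\<Sum>c'\<in>UNIV. P$c$c' *\<^sub>R Lam c')) = (\<Sum>c\<in>UNIV. \<Sum>c'\<in>UNIV. (E$e1$c * P$c$c') *\<^sub>R Lam c')"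
    by (simp add: scaleR_sum_right)
  also have "\<dots> = (\<Sum>c'\<in>UNIV. \<Sum>c\<in>UNIV. (E$e1$c * P$c$c') *\<^sub>R Lam c')"
    by (rule sum.swap)
  also have "\<dots> = (\<Sum>c'\<in>UNIV. (E ** P)$e1$c' *\<^sub>R Lam c')"
    by (simp add: matrix_matrix_mult_def scaleR_sum_left)
  finally show ?thesis .
qed

lemma alg_id:
  fixes E P :: "real^'k^'k" and Lam :: "'k \<Rightarrow> real^'n^'n" and Mx L Lo :: "real^'n^'n" and eta :: "real^'k"
  shows "(\<Sum>c\<in>UNIV. E$e1$c *\<^sub>R (- (transpose Mx ** Lam c + Lam c ** Mx + L + ((\<Sum>c'\<in>UNIV. P$c$c' *\<^sub>R Lam c') + eta$c *\<^sub>R Lo))) + (E ** P)$e1$c *\<^sub>R Lam c)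
     + transpose Mx ** (\<Sum>c\<in>UNIV. E$e1$c *\<^sub>R Lam c) + (\<Sum>c\<in>UNIV. E$e1$c *\<^sub>R Lam c) ** Mx
     = - ((\<Sum>c\<in>UNIV. E$e1$c) *\<^sub>R L + (\<Sum>c\<in>UNIV. E$e1$c * eta$c) *\<^sub>R Lo)"
proof -
  let ?F = "\<lambda>c. (E ** P)$e1$c *\<^sub>R Lam c"
  let ?A = "\<lambda>c. E$e1$c *\<^sub>R (transpose Mx ** Lam c)"
  let ?B = "\<lambda>c. E$e1$c *\<^sub>R (Lam c ** Mx)"
  let ?L = "\<lambda>c. E$e1$c *\<^sub>R L"
  let ?C = "\<lambda>c. E$e1$c *\<^sub>R (\<Sum>c'\<in>UNIV. P$c$c' *\<^sub>R Lam c')"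
  let ?D = "\<lambda>c. (E$e1$c * eta$c) *\<^sub>R Lo"
  have "(\<Sum>c\<in>UNIV. E$e1$c *\<^sub>R (- (transpose Mx ** Lam c + Lam c ** Mx + L + ((\<Sum>c'\<in>UNIV. P$c$c' *\<^sub>R Lam c') + eta$c *\<^sub>R Lo))) + (E ** P)$e1$c *\<^sub>R Lam c)
     = (\<Sum>c\<in>UNIV. ?F c - ?A c - ?B c - ?L c - ?C c - ?D c)"
    by (rule sum.cong) (simp_all add: algebra_simps)
  also have "\<dots> = sum ?F UNIV - sum ?A UNIV - sum ?B UNIV - sum ?L UNIV - sum ?C UNIV - sum ?D UNIV"
    by (simp only: sum_subtractf)
  also have "sum ?C UNIV = sum ?F UNIV" by (rule swap_id)
  also have "sum ?A UNIV = transpose Mx ** (\<Sum>c\<in>UNIV. E$e1$c *\<^sub>R Lam c)"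
    by (simp add: mm_sum_right mm_scaleR_right)
  also have "sum ?B UNIV = (\<Sum>c\<in>UNIV. E$e1$c *\<^sub>R Lam c) ** Mx"
    by (simp add: mm_sum_left mm_scaleR_left)
  also have "sum ?L UNIV = (\<Sum>c\<in>UNIV. E$e1$c) *\<^sub>R L"
    by (simp add: scaleR_sum_left)
  also have "sum ?D UNIV = (\<Sum>c\<in>UNIV. E$e1$c * eta$c) *\<^sub>R Lo"
    by (simp add: scaleR_sum_left)
  finally show ?thesis by (simp add: algebra_simps)
qed



lemma E_deriv_shift:
  fixes P :: "real^'k^'k"
  shows "((\<lambda>s. mat_exp ((s - t) *\<^sub>R P)) has_vector_derivative (mat_exp ((s - t) *\<^sub>R P) ** P)) (at s)"
proof -
  have "((\<lambda>s. s - t) has_vector_derivative 1) (at s)" by (auto intro!: derivative_eq_intros)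
  from vector_diff_chain_at[OF this mat_exp_deriv[of P "s - t"]]
  show ?thesis by (simp add: o_def)
qed

lemma E_entry_deriv:
  fixes P :: "real^'k^'k"
  shows "((\<lambda>s. mat_exp ((s - t) *\<^sub>R P) $ i $ j) has_real_derivative ((mat_exp ((s - t) *\<^sub>R P) ** P) $ i $ j)) (at s within T)"
proof -
  have bl: "bounded_linear (\<lambda>A::real^'k^'k. A $ i $ j)"
    using bounded_linear_compose[OF bounded_linear_vec_nth bounded_linear_vec_nth] by blast
  have "((\<lambda>s. mat_exp ((s - t) *\<^sub>R P) $ i $ j) has_vector_derivative ((mat_exp ((s - t) *\<^sub>R P) ** P) $ i $ j)) (at s)"
    by (rule bounded_linear.has_vector_derivative[OF bl E_deriv_shift])
  then show ?thesis
    by (simp add: has_real_derivative_iff_has_vector_derivative has_vector_derivative_at_within)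
qed

lemma E_entry_cont:
  fixes P :: "real^'k^'k"
  shows "continuous_on T (\<lambda>s. mat_exp ((s - t) *\<^sub>R P) $ i $ j)"
  using E_entry_deriv[of t P i j _ UNIV, THEN DERIV_isCont]
  by (intro continuous_at_imp_continuous_on) blast

lemma axis_inner1: "axis i (1::real) \<bullet> x = x $ i"
  by (metis cart_eq_inner_axis inner_commute)

lemma core:
  fixes tf t Km :: real
    and M L Lo :: "real \<Rightarrow> real^'n^'n"
    and P :: "real^('k::{finite,wellorder})^('k::{finite,wellorder})"
    and Lam :: "'k \<Rightarrow> real \<Rightarrow> real^'n^'n" and S :: "real^'n^'n"
  assumes t: "t \<in> {0..tf}"
    and Mb: "\<forall>s\<in>{0..tf}. norm (M s) \<le> Km" and DM: "finite DM" and Mc: "continuous_on ({0..tf} - DM) M"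
    and Lc: "\<And>c. continuous_on {0..tf} (Lam c)" and Loc: "continuous_on {0..tf} Lo"
    and DL: "finite DL"
    and Ld: "\<And>c s. s \<in> {0..tf} - DL \<Longrightarrow> (Lam c has_vector_derivative
        - (transpose (M s) ** Lam c s + Lam c s ** M s + L s
           + ((\<Sum>c'\<in>UNIV. P $ c $ c' *\<^sub>R Lam c' s) + exit_vec P $ c *\<^sub>R Lo s))) (at s within {0..tf})"
    and Lf: "\<And>c. Lam c tf = S"
  shows "Lam first_phase t = ph_ccdf P first_unit (tf - t) *\<^sub>R (transpose (state_trans M tf t) ** S ** state_trans M tf t)
     + integral {t..tf} (\<lambda>\<tau>. ph_ccdf P first_unit (\<tau> - t) *\<^sub>R (transpose (state_trans M \<tau> t) ** L \<tau> ** state_trans M \<tau> t))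
     + integral {t..tf} (\<lambda>\<tau>. ph_pdf P first_unit (\<tau> - t) *\<^sub>R (transpose (state_trans M \<tau> t) ** Lo \<tau> ** state_trans M \<tau> t))"
proof -
  have ttf: "t \<le> tf" using t by simp
  have Mb': "\<forall>s\<in>{t..tf}. norm (M s) \<le> Km" using Mb t by auto
  have Mc': "continuous_on ({t..tf} - DM) M" by (rule continuous_on_subset[OF Mc]) (use t in auto)
  obtain X where X: "X t = mat 1" "continuous_on {t..tf} X"
    "\<forall>s\<in>{t..tf} - DM. (X has_vector_derivative M s ** X s) (at s within {t..tf})"
    "\<forall>s\<in>{t..tf}. state_trans M s t = X s"
    using state_trans_sol[OF ttf Mb' DM Mc'] by blast
  define e1 where "e1 = (first_phase :: 'k)"
  define E where "E u = mat_exp (u *\<^sub>R P)" for u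
  define cc where "cc u = (\<Sum>c\<in>UNIV. E u $ e1 $ c)" for u
  define pd where "pd u = (\<Sum>c\<in>UNIV. E u $ e1 $ c * exit_vec P $ c)" for u
  have ccdf: "ph_ccdf P first_unit u = cc u" for u
    by (simp add: ph_ccdf_def first_unit_def cc_def E_def e1_def axis_inner1
        matrix_vector_mult_def)
  have pdf: "ph_pdf P first_unit u = pd u" for u
    by (simp add: ph_pdf_def first_unit_def pd_def E_def e1_def axis_inner1
        matrix_vector_mult_def)
  define W where "W s = (\<Sum>c\<in>UNIV. E (s - t) $ e1 $ c *\<^sub>R Lam c s)" for s
  define Z where "Z s = transpose (X s) ** W s ** X s" for s
  define G where "G s = cc (s - t) *\<^sub>R (transpose (X s) ** L s ** X s) + pd (s - t) *\<^sub>R (transpose (X s) ** Lo s ** X s)" for s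
  have Wc: "continuous_on {t..tf} W"
    unfolding W_def E_def
    by (intro continuous_on_sum continuous_on_scaleR E_entry_cont continuous_on_subset[OF Lc]) (use t in auto)
  have Zc: "continuous_on {t..tf} Z"
    unfolding Z_def
    by (intro bounded_bilinear.continuous_on[OF bb_mm] bounded_linear.continuous_on[OF bl_transpose] X(2) Wc)
  have Zd: "(Z has_vector_derivative - G s) (at s)" if s: "s \<in> {t<..<tf} - (DM \<union> DL)" for s
  proof -
    have Xd: "(X has_vector_derivative M s ** X s) (at s)"
    proof -
      have "s \<in> {t..tf} - DM" using s by auto
      then have "(X has_vector_derivative M s ** X s) (at s within {t..tf})" using X(3) by blast
      moreover have "at s within {t..tf} = at s" using s by (intro at_within_interior) auto
      ultimately show ?thesis by simp
    qed
    have Ldc: "(Lam c has_vector_derivative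
        - (transpose (M s) ** Lam c s + Lam c s ** M s + L s
           + ((\<Sum>c'\<in>UNIV. P $ c $ c' *\<^sub>R Lam c' s) + exit_vec P $ c *\<^sub>R Lo s))) (at s)" for c
    proof -
      have "s \<in> {0..tf} - DL" using s t by auto
      note Ld[OF this, of c]
      moreover have "at s within {0..tf} = at s" using s t by (intro at_within_interior) auto
      ultimately show ?thesis by simp
    qed
    define DW where "DW = (\<Sum>c\<in>UNIV. E (s - t) $ e1 $ c *\<^sub>R (- (transpose (M s) ** Lam c s + Lam c s ** M s + L s
           + ((\<Sum>c'\<in>UNIV. P $ c $ c' *\<^sub>R Lam c' s) + exit_vec P $ c *\<^sub>R Lo s))) + (E (s - t) ** P) $ e1 $ c *\<^sub>R Lam c s)"
    have Wd: "(W has_vector_derivative DW) (at s)"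
      unfolding W_def E_def DW_def
      by (intro has_vector_derivative_sum has_vector_derivative_scaleR E_entry_deriv Ldc)
    have tXd: "((\<lambda>u. transpose (X u)) has_vector_derivative transpose (X s) ** transpose (M s)) (at s)"
      using bounded_linear.has_vector_derivative[OF bl_transpose Xd] by (simp add: matrix_transpose_mul)
    have id: "DW + transpose (M s) ** W s + W s ** M s = - (cc (s - t) *\<^sub>R L s + pd (s - t) *\<^sub>R Lo s)"
      unfolding W_def cc_def pd_def DW_def by (rule alg_id)
    have Zd0: "(Z has_vector_derivative
        (transpose (X s) ** W s ** (M s ** X s) + (transpose (X s) ** DW + (transpose (X s) ** transpose (M s)) ** W s) ** X s)) (at s)"
      unfolding Z_def
      by (intro bounded_bilinear.has_vector_derivative[OF bb_mm] tXd Wd Xd)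
    have "transpose (X s) ** W s ** (M s ** X s) + (transpose (X s) ** DW + (transpose (X s) ** transpose (M s)) ** W s) ** X s
       = transpose (X s) ** (DW + transpose (M s) ** W s + W s ** M s) ** X s"
      by (simp add: matrix_add_ldistrib mm_add_left matrix_mul_assoc algebra_simps)
    also have "\<dots> = - G s"
      unfolding id G_def
      by (simp add: matrix_add_ldistrib mm_add_left mm_minus_left mm_minus_right mm_diff_left mm_diff_right mm_scaleR_left mm_scaleR_right matrix_mul_assoc)
    finally show ?thesis using Zd0 by simp
  qed
  have "((\<lambda>s. - G s) has_integral (Z tf - Z t)) {t..tf}"
    by (rule fundamental_theorem_of_calculus_interior_strong[of "DM \<union> DL", OF _ ttf Zd Zc]) (use DM DL in auto)
  then have Gi: "(G has_integral (Z t - Z tf)) {t..tf}"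
    using has_integral_neg[of "\<lambda>s. - G s" "Z tf - Z t" "{t..tf}"] by simp
  define G2 where "G2 s = pd (s - t) *\<^sub>R (transpose (X s) ** Lo s ** X s)" for s
  define G1 where "G1 s = cc (s - t) *\<^sub>R (transpose (X s) ** L s ** X s)" for s
  have G2i: "G2 integrable_on {t..tf}"
  proof (rule integrable_continuous_interval)
    have "continuous_on {t..tf} (\<lambda>s. pd (s - t))"
      unfolding pd_def E_def
      by (intro continuous_on_sum continuous_on_mult continuous_on_const E_entry_cont)
    moreover have "continuous_on {t..tf} Lo" by (rule continuous_on_subset[OF Loc]) (use t in auto)
    ultimately show "continuous_on {t..tf} G2"
      unfolding G2_def
      by (intro continuous_on_scaleR bounded_bilinear.continuous_on[OF bb_mm]
          bounded_linear.continuous_on[OF bl_transpose] X(2))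
  qed
  have G1i: "G1 integrable_on {t..tf}"
  proof -
    have "(\<lambda>s. G s - G2 s) integrable_on {t..tf}" using Gi G2i by (intro integrable_diff) auto
    moreover have "G s - G2 s = G1 s" for s by (simp add: G_def G1_def G2_def)
    ultimately show ?thesis by simp
  qed
  have "Z t - Z tf = integral {t..tf} G" using Gi by (simp add: integral_unique)
  also have "\<dots> = integral {t..tf} G1 + integral {t..tf} G2"
  proof -
    have "G = (\<lambda>s. G1 s + G2 s)" by (rule ext) (simp add: G_def G1_def G2_def)
    then show ?thesis using integral_add[OF G1i G2i] by simp
  qed
  finally have Zeq: "Z t = Z tf + integral {t..tf} G1 + integral {t..tf} G2"
    by (simp add: algebra_simps)
  have Zt: "Z t = Lam first_phase t"
  proof -
    have "E 0 = mat 1" unfolding E_def by (rule mat_exp_zero)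
    then have "W t = (\<Sum>c\<in>UNIV. (if e1 = c then Lam c t else 0))"
      unfolding W_def by (intro sum.cong) (simp_all add: mat_def)
    also have "\<dots> = Lam e1 t" by (simp add: sum.delta)
    finally have "W t = Lam e1 t" .
    then show ?thesis by (simp add: Z_def X(1) e1_def)
  qed
  have Ztf: "Z tf = cc (tf - t) *\<^sub>R (transpose (X tf) ** S ** X tf)"
    by (simp add: Z_def W_def cc_def Lf scaleR_sum_left[symmetric] mm_scaleR_left mm_scaleR_right)
  have I1: "integral {t..tf} (\<lambda>\<tau>. ph_ccdf P first_unit (\<tau> - t) *\<^sub>R (transpose (state_trans M \<tau> t) ** L \<tau> ** state_trans M \<tau> t))
      = integral {t..tf} G1"
    by (rule integral_cong) (simp add: X(4) ccdf G1_def)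
  have I2: "integral {t..tf} (\<lambda>\<tau>. ph_pdf P first_unit (\<tau> - t) *\<^sub>R (transpose (state_trans M \<tau> t) ** Lo \<tau> ** state_trans M \<tau> t))
      = integral {t..tf} G2"
    by (rule integral_cong) (simp add: X(4) pdf G2_def)
  show ?thesis
    unfolding I1 I2 using Zeq Zt Ztf X(4) ttf by (simp add: ccdf)
qed

lemma bpc_comb:
  fixes A :: "real \<Rightarrow> real^'n^'n" and B :: "real \<Rightarrow> real^'q^'n" and G :: "real \<Rightarrow> real^'n^'q"
  assumes "bpc_on 0 tf A" "bpc_on 0 tf B" "bpc_on 0 tf G"
  obtains Km D where "finite D" "\<forall>s\<in>{0..tf}. norm (A s + B s ** G s) \<le> Km"
    "continuous_on ({0..tf} - D) (\<lambda>s. A s + B s ** G s)"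
proof -
  obtain D1 where D1: "finite D1" "continuous_on ({0..tf} - D1) A" and bA: "bounded (A ` {0..tf})"
    using assms(1) unfolding bpc_on_def by blast
  obtain D2 where D2: "finite D2" "continuous_on ({0..tf} - D2) B" and bB: "bounded (B ` {0..tf})"
    using assms(2) unfolding bpc_on_def by blast
  obtain D3 where D3: "finite D3" "continuous_on ({0..tf} - D3) G" and bG: "bounded (G ` {0..tf})"
    using assms(3) unfolding bpc_on_def by blast
  obtain Ka where Ka: "\<forall>s\<in>{0..tf}. norm (A s) \<le> Ka" using bA by (auto simp: bounded_iff)
  obtain Kb where Kb: "\<forall>s\<in>{0..tf}. norm (B s) \<le> Kb" using bB by (auto simp: bounded_iff)
  obtain Kg where Kg: "\<forall>s\<in>{0..tf}. norm (G s) \<le> Kg" using bG by (auto simp: bounded_iff)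
  obtain K where K: "K > 0" "\<And>X Y. norm ((X::real^'q^'n) ** (Y::real^'n^'q)) \<le> norm X * norm Y * K"
    using mm_norm_bound by blast
  have "\<forall>s\<in>{0..tf}. norm (A s + B s ** G s) \<le> Ka + Kb * Kg * K"
  proof
    fix s assume s: "s \<in> {0..tf}"
    have n0: "norm (A s + B s ** G s) \<le> norm (A s) + norm (B s ** G s)" by (rule norm_triangle_ineq)
    have n1: "norm (B s ** G s) \<le> norm (B s) * norm (G s) * K" by (rule K(2))
    have bs: "norm (B s) \<le> Kb" and gs: "norm (G s) \<le> Kg" using Kb Kg s by auto
    have "0 \<le> Kb" using bs norm_ge_zero order_trans by blast
    have n2: "norm (B s) * norm (G s) * K \<le> Kb * Kg * K"
      using bs gs K(1) \<open>0 \<le> Kb\<close> by (intro mult_right_mono mult_mono) auto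
    have "norm (A s) \<le> Ka" using Ka s by blast
    with n0 n1 n2 show "norm (A s + B s ** G s) \<le> Ka + Kb * Kg * K" by linarith
  qed
  moreover have "continuous_on ({0..tf} - (D1 \<union> D2 \<union> D3)) (\<lambda>s. A s + B s ** G s)"
  proof -
    have cA: "continuous_on ({0..tf} - (D1 \<union> D2 \<union> D3)) A" by (rule continuous_on_subset[OF D1(2)]) auto
    have cB: "continuous_on ({0..tf} - (D1 \<union> D2 \<union> D3)) B" by (rule continuous_on_subset[OF D2(2)]) auto
    have cG: "continuous_on ({0..tf} - (D1 \<union> D2 \<union> D3)) G" by (rule continuous_on_subset[OF D3(2)]) auto
    show ?thesis by (intro continuous_on_add bounded_bilinear.continuous_on[OF bb_mm] cA cB cG)
  qed
  moreover have "finite (D1 \<union> D2 \<union> D3)" using D1 D2 D3 by simp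
  ultimately show ?thesis by (rule that[rotated])
qed

lemma first_unit_nth: "first_unit $ d = (if d = first_phase then 1 else (0::real))"
  by (simp add: first_unit_def axis_def)

lemma pibar_Inl:
  fixes F :: "('m::{finite,wellorder}) + ('p::{finite,wellorder}) \<Rightarrow> real^'n^'n"
  shows "(\<Sum>j\<in>UNIV. pibar Pa first_unit Pb first_unit $ Inl c $ j *\<^sub>R F j)
    = (\<Sum>c'\<in>UNIV. Pa $ c $ c' *\<^sub>R F (Inl c')) + exit_vec Pa $ c *\<^sub>R F (Inr first_phase)"
proof -
  have "(\<Sum>j\<in>UNIV. pibar Pa first_unit Pb first_unit $ Inl c $ j *\<^sub>R F j)
      = (\<Sum>j\<in>UNIV <+> UNIV. pibar Pa first_unit Pb first_unit $ Inl c $ j *\<^sub>R F j)"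
    by simp
  also have "\<dots> = (\<Sum>c'\<in>UNIV. Pa $ c $ c' *\<^sub>R F (Inl c')) + (\<Sum>d\<in>UNIV. (exit_vec Pa $ c * first_unit $ d) *\<^sub>R F (Inr d))"
    by (subst sum.Plus) (simp_all add: pibar_def)
  also have "(\<Sum>d\<in>UNIV. (exit_vec Pa $ c * first_unit $ d) *\<^sub>R F (Inr d))
      = (\<Sum>d\<in>UNIV. if d = first_phase then exit_vec Pa $ c *\<^sub>R F (Inr d) else 0)"
    by (intro sum.cong) (auto simp: first_unit_nth)
  also have "\<dots> = exit_vec Pa $ c *\<^sub>R F (Inr first_phase)" by (simp add: sum.delta')
  finally show ?thesis .
qed

lemma pibar_Inr:
  fixes F :: "('m::{finite,wellorder}) + ('p::{finite,wellorder}) \<Rightarrow> real^'n^'n"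
  shows "(\<Sum>j\<in>UNIV. pibar Pa first_unit Pb first_unit $ Inr c $ j *\<^sub>R F j)
    = (\<Sum>c'\<in>UNIV. Pb $ c $ c' *\<^sub>R F (Inr c')) + exit_vec Pb $ c *\<^sub>R F (Inl first_phase)"
proof -
  have "(\<Sum>j\<in>UNIV. pibar Pa first_unit Pb first_unit $ Inr c $ j *\<^sub>R F j)
      = (\<Sum>j\<in>UNIV <+> UNIV. pibar Pa first_unit Pb first_unit $ Inr c $ j *\<^sub>R F j)"
    by simp
  also have "\<dots> = (\<Sum>d\<in>UNIV. (exit_vec Pb $ c * first_unit $ d) *\<^sub>R F (Inl d)) + (\<Sum>c'\<in>UNIV. Pb $ c $ c' *\<^sub>R F (Inr c'))"
    by (subst sum.Plus) (simp_all add: pibar_def)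
  also have "(\<Sum>d\<in>UNIV. (exit_vec Pb $ c * first_unit $ d) *\<^sub>R F (Inl d))
      = (\<Sum>d\<in>UNIV. if d = first_phase then exit_vec Pb $ c *\<^sub>R F (Inl d) else 0)"
    by (intro sum.cong) (auto simp: first_unit_nth)
  also have "\<dots> = exit_vec Pb $ c *\<^sub>R F (Inl first_phase)" by (simp add: sum.delta')
  finally show ?thesis by (simp add: add.commute)
qed

theorem theorem3:
  fixes tf :: real
    and A1 A2 Q1 Q2 :: "real \<Rightarrow> real^'n^'n"
    and B1 B2 :: "real \<Rightarrow> real^'q^'n"
    and \<Gamma>1 \<Gamma>2 :: "real \<Rightarrow> real^'n^'q"
    and R1 R2 :: "real \<Rightarrow> real^'q^'q"
    and S1 S2 :: "real^'n^'n"
    and Pa :: "real^('m::{finite,wellorder})^('m::{finite,wellorder})"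
    and Pb :: "real^('p::{finite,wellorder})^('p::{finite,wellorder})"
    and \<Lambda> :: "('m::{finite,wellorder}) + ('p::{finite,wellorder}) \<Rightarrow> real \<Rightarrow> real^'n^'n"
  assumes tf_pos: "tf > 0"
    and pc: "bpc_on 0 tf A1" "bpc_on 0 tf A2" "bpc_on 0 tf B1" "bpc_on 0 tf B2"
            "bpc_on 0 tf \<Gamma>1" "bpc_on 0 tf \<Gamma>2" "bpc_on 0 tf Q1" "bpc_on 0 tf Q2"
            "bpc_on 0 tf R1" "bpc_on 0 tf R2"
    and sub: "subgenerator Pa" "subgenerator Pb"
    and Lam_cont: "\<And>i. continuous_on {0..tf} (\<Lambda> i)"
    and Lam_ode: "\<exists>D. finite D \<and> (\<forall>i. \<forall>s\<in>{0..tf} - D.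
        ((\<Lambda> i) has_vector_derivative
           (let Ab = (case i of Inl _ \<Rightarrow> A1 s + B1 s ** \<Gamma>1 s | Inr _ \<Rightarrow> A2 s + B2 s ** \<Gamma>2 s);
                L = (case i of Inl _ \<Rightarrow> Q1 s + transpose (\<Gamma>1 s) ** R1 s ** \<Gamma>1 s
                             | Inr _ \<Rightarrow> Q2 s + transpose (\<Gamma>2 s) ** R2 s ** \<Gamma>2 s)
            in - (transpose Ab ** \<Lambda> i s + \<Lambda> i s ** Ab + L
                  + (\<Sum>j\<in>UNIV. pibar Pa first_unit Pb first_unit $ i $ j *\<^sub>R \<Lambda> j s))))
          (at s within {0..tf}))"
    and Lam_final: "\<And>r. \<Lambda> (Inl r) tf = S1" "\<And>c. \<Lambda> (Inr c) tf = S2"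
  shows "\<forall>t\<in>{0..tf}.
    (let Ab1 = (\<lambda>s. A1 s + B1 s ** \<Gamma>1 s);
         L1 = (\<lambda>s. Q1 s + transpose (\<Gamma>1 s) ** R1 s ** \<Gamma>1 s);
         Ab2 = (\<lambda>s. A2 s + B2 s ** \<Gamma>2 s);
         L2 = (\<lambda>s. Q2 s + transpose (\<Gamma>2 s) ** R2 s ** \<Gamma>2 s);
         \<alpha>a = first_unit; \<alpha>b = first_unit
     in \<Lambda> (Inl first_phase) t =
          ph_ccdf Pa \<alpha>a (tf - t) *\<^sub>R
            (transpose (state_trans Ab1 tf t) ** S1 ** state_trans Ab1 tf t)
        + integral {t..tf} (\<lambda>\<tau>. ph_ccdf Pa \<alpha>a (\<tau> - t) *\<^sub>R
            (transpose (state_trans Ab1 \<tau> t) ** L1 \<tau> ** state_trans Ab1 \<tau> t))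
        + integral {t..tf} (\<lambda>\<tau>. ph_pdf Pa \<alpha>a (\<tau> - t) *\<^sub>R
            (transpose (state_trans Ab1 \<tau> t) ** \<Lambda> (Inr first_phase) \<tau> ** state_trans Ab1 \<tau> t))
      \<and> \<Lambda> (Inr first_phase) t =
          ph_ccdf Pb \<alpha>b (tf - t) *\<^sub>R
            (transpose (state_trans Ab2 tf t) ** S2 ** state_trans Ab2 tf t)
        + integral {t..tf} (\<lambda>\<tau>. ph_ccdf Pb \<alpha>b (\<tau> - t) *\<^sub>R
            (transpose (state_trans Ab2 \<tau> t) ** L2 \<tau> ** state_trans Ab2 \<tau> t))
        + integral {t..tf} (\<lambda>\<tau>. ph_pdf Pb \<alpha>b (\<tau> - t) *\<^sub>R
            (transpose (state_trans Ab2 \<tau> t) ** \<Lambda> (Inl first_phase) \<tau> ** state_trans Ab2 \<tau> t)))"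
proof -
  obtain DL where DL: "finite DL" and LD: "\<forall>i. \<forall>s\<in>{0..tf} - DL.
        ((\<Lambda> i) has_vector_derivative
           (let Ab = (case i of Inl _ \<Rightarrow> A1 s + B1 s ** \<Gamma>1 s | Inr _ \<Rightarrow> A2 s + B2 s ** \<Gamma>2 s);
                L = (case i of Inl _ \<Rightarrow> Q1 s + transpose (\<Gamma>1 s) ** R1 s ** \<Gamma>1 s
                             | Inr _ \<Rightarrow> Q2 s + transpose (\<Gamma>2 s) ** R2 s ** \<Gamma>2 s)
            in - (transpose Ab ** \<Lambda> i s + \<Lambda> i s ** Ab + L
                  + (\<Sum>j\<in>UNIV. pibar Pa first_unit Pb first_unit $ i $ j *\<^sub>R \<Lambda> j s))))
          (at s within {0..tf})"
    using Lam_ode by (elim exE conjE)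
  obtain Km1 D1 where M1: "finite D1" "\<forall>s\<in>{0..tf}. norm (A1 s + B1 s ** \<Gamma>1 s) \<le> Km1"
    "continuous_on ({0..tf} - D1) (\<lambda>s. A1 s + B1 s ** \<Gamma>1 s)"
    by (rule bpc_comb[OF pc(1) pc(3) pc(5)])
  obtain Km2 D2 where M2: "finite D2" "\<forall>s\<in>{0..tf}. norm (A2 s + B2 s ** \<Gamma>2 s) \<le> Km2"
    "continuous_on ({0..tf} - D2) (\<lambda>s. A2 s + B2 s ** \<Gamma>2 s)"
    by (rule bpc_comb[OF pc(2) pc(4) pc(6)])
  have La: "(\<Lambda> (Inl c) has_vector_derivative
        - (transpose (A1 s + B1 s ** \<Gamma>1 s) ** \<Lambda> (Inl c) s + \<Lambda> (Inl c) s ** (A1 s + B1 s ** \<Gamma>1 s)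
           + (Q1 s + transpose (\<Gamma>1 s) ** R1 s ** \<Gamma>1 s)
           + ((\<Sum>c'\<in>UNIV. Pa $ c $ c' *\<^sub>R \<Lambda> (Inl c') s) + exit_vec Pa $ c *\<^sub>R \<Lambda> (Inr first_phase) s))) (at s within {0..tf})"
    if "s \<in> {0..tf} - DL" for c s
    using LD[rule_format, OF that, of "Inl c"] by (simp only: Let_def sum.case pibar_Inl)
  have Lb: "(\<Lambda> (Inr c) has_vector_derivative
        - (transpose (A2 s + B2 s ** \<Gamma>2 s) ** \<Lambda> (Inr c) s + \<Lambda> (Inr c) s ** (A2 s + B2 s ** \<Gamma>2 s)
           + (Q2 s + transpose (\<Gamma>2 s) ** R2 s ** \<Gamma>2 s)
           + ((\<Sum>c'\<in>UNIV. Pb $ c $ c' *\<^sub>R \<Lambda> (Inr c') s) + exit_vec Pb $ c *\<^sub>R \<Lambda> (Inl first_phase) s))) (at s within {0..tf})"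
    if "s \<in> {0..tf} - DL" for c s
    using LD[rule_format, OF that, of "Inr c"] by (simp only: Let_def sum.case pibar_Inr)
  show ?thesis
    unfolding Let_def
  proof (intro ballI conjI)
    fix t assume t: "t \<in> {0..tf}"
    show "\<Lambda> (Inl first_phase) t =
          ph_ccdf Pa first_unit (tf - t) *\<^sub>R
            (transpose (state_trans (\<lambda>s. A1 s + B1 s ** \<Gamma>1 s) tf t) ** S1 ** state_trans (\<lambda>s. A1 s + B1 s ** \<Gamma>1 s) tf t)
        + integral {t..tf} (\<lambda>\<tau>. ph_ccdf Pa first_unit (\<tau> - t) *\<^sub>R
            (transpose (state_trans (\<lambda>s. A1 s + B1 s ** \<Gamma>1 s) \<tau> t) ** (Q1 \<tau> + transpose (\<Gamma>1 \<tau>) ** R1 \<tau> ** \<Gamma>1 \<tau>) ** state_trans (\<lambda>s. A1 s + B1 s ** \<Gamma>1 s) \<tau> t))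
        + integral {t..tf} (\<lambda>\<tau>. ph_pdf Pa first_unit (\<tau> - t) *\<^sub>R
            (transpose (state_trans (\<lambda>s. A1 s + B1 s ** \<Gamma>1 s) \<tau> t) ** \<Lambda> (Inr first_phase) \<tau> ** state_trans (\<lambda>s. A1 s + B1 s ** \<Gamma>1 s) \<tau> t))"
      using core[where M="\<lambda>s. A1 s + B1 s ** \<Gamma>1 s" and L="\<lambda>s. Q1 s + transpose (\<Gamma>1 s) ** R1 s ** \<Gamma>1 s"
          and Lo="\<Lambda> (Inr first_phase)" and P=Pa and Lam="\<lambda>c. \<Lambda> (Inl c)" and S=S1,
          OF t M1(2) M1(1) M1(3) Lam_cont Lam_cont DL La Lam_final(1)] by simp
    show "\<Lambda> (Inr first_phase) t =
          ph_ccdf Pb first_unit (tf - t) *\<^sub>R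
            (transpose (state_trans (\<lambda>s. A2 s + B2 s ** \<Gamma>2 s) tf t) ** S2 ** state_trans (\<lambda>s. A2 s + B2 s ** \<Gamma>2 s) tf t)
        + integral {t..tf} (\<lambda>\<tau>. ph_ccdf Pb first_unit (\<tau> - t) *\<^sub>R
            (transpose (state_trans (\<lambda>s. A2 s + B2 s ** \<Gamma>2 s) \<tau> t) ** (Q2 \<tau> + transpose (\<Gamma>2 \<tau>) ** R2 \<tau> ** \<Gamma>2 \<tau>) ** state_trans (\<lambda>s. A2 s + B2 s ** \<Gamma>2 s) \<tau> t))
        + integral {t..tf} (\<lambda>\<tau>. ph_pdf Pb first_unit (\<tau> - t) *\<^sub>R
            (transpose (state_trans (\<lambda>s. A2 s + B2 s ** \<Gamma>2 s) \<tau> t) ** \<Lambda> (Inl first_phase) \<tau> ** state_trans (\<lambda>s. A2 s + B2 s ** \<Gamma>2 s) \<tau> t))"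
      using core[where M="\<lambda>s. A2 s + B2 s ** \<Gamma>2 s" and L="\<lambda>s. Q2 s + transpose (\<Gamma>2 s) ** R2 s ** \<Gamma>2 s"
          and Lo="\<Lambda> (Inl first_phase)" and P=Pb and Lam="\<lambda>c. \<Lambda> (Inr c)" and S=S2,
          OF t M2(2) M2(1) M2(3) Lam_cont Lam_cont DL Lb Lam_final(2)] by simp
  qed
qed


end
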